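(* Let $G$ be a full 1-plane graph satisfying the kite-edge standing assumption, and let $S$ be a minimal separating set of $G$. Then every transition face $F$ of $G^\times$ has, on its boundary walk, at least two occurrences of vertices of $S$ (either two distinct vertices of $S$, or two incidences with the same vertex of $S$).
   Context: A 1-plane graph is a graph $G$ with a good drawing in the plane (edges are simple curves; two edges intersect only at a common endpoint or a proper crossing; any two edges intersect at most once; no three edges cross at one point) in which every edge is crossed at most once. For a crossing of edges $(u,v)$ and $(w,x)$, its endpoints are $u,v,w,x$; two endpoints are consecutive if they are not $\{u,v\}$ and not $\{w,x\}$. $G$ is full 1-plane if for every crossing every two consecutive endpoints are adjacent. The planarization $G^\times$ replaces each crossing point by a new dummy vertex adjacent to the four endpoints. An edge joining consecutive endpoints $u,x$ of a crossing with dummy vertex $c$ is a kite edge if it is uncrossed and $G^\times$ has a face bounded exactly by it and $(u,c),(c,x)$. Standing assumption: for every crossing and every pair of adjacent consecutive endpoints, some edge joining them is a kite edge of that crossing. A separating set $S\subseteq V(G)$ is one with $G-S$ disconnected; the flaps are the connected components of $G-S$. A face $F$ of $G^\times$ is a transition face (with respect to $S$) if $F$ is incident to an edge of $G^\times$ both of whose endpoints are in $S$, or $F$ is incident to vertices from two different flaps of $G-S$. *)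

theory Defs
  imports Main
begin

text \<open>
Combinatorial encoding of the planarization G^x of a 1-plane (multi)graph G.
G^x is given as a plane combinatorial map (rotation system):
  D      finite set of darts (half-edges) of G^x,
  alpha  fixed-point-free involution on D (the two darts of one edge of G^x),
  sigma  rotation: permutation of D whose cycles are the darts around a vertex,
  tail   the vertex a dart leaves from,
  V      vertex set of G^x,
  C      the dummy (crossing) vertices; V - C are the vertices of G.
Faces of G^x are the orbits of sigma o alpha; the orbit of a face, read in order,
is its boundary walk, each dart d in it being one occurrence of the vertex tail d.
\<close>

definition orb :: "('d \<Rightarrow> 'd) \<Rightarrow> 'd \<Rightarrow> 'd set" where
  "orb f d = {(f ^^ n) d | n. True}"

definition faces :: "'d set \<Rightarrow> ('d \<Rightarrow> 'd) \<Rightarrow> ('d \<Rightarrow> 'd) \<Rightarrow> 'd set set" where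
  "faces D alpha sigma = (\<lambda>d. orb (sigma \<circ> alpha) d) ` D"

definition comb_map ::
  "'d set \<Rightarrow> ('d \<Rightarrow> 'd) \<Rightarrow> ('d \<Rightarrow> 'd) \<Rightarrow> ('d \<Rightarrow> 'v) \<Rightarrow> 'v set \<Rightarrow> bool" where
  "comb_map D alpha sigma tail V \<longleftrightarrow>
     finite D \<and> finite V \<and>
     (\<forall>d\<in>D. alpha d \<in> D \<and> alpha d \<noteq> d \<and> alpha (alpha d) = d) \<and>
     bij_betw sigma D D \<and>
     tail ` D = V \<and>
     (\<forall>d\<in>D. \<forall>d'\<in>D. tail d = tail d' \<longleftrightarrow> d' \<in> orb sigma d)"

definition gx_adj :: "'d set \<Rightarrow> ('d \<Rightarrow> 'd) \<Rightarrow> ('d \<Rightarrow> 'v) \<Rightarrow> 'v \<Rightarrow> 'v \<Rightarrow> bool" where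
  "gx_adj D alpha tail u v \<longleftrightarrow> (\<exists>d\<in>D. tail d = u \<and> tail (alpha d) = v)"

text \<open>a connected map of genus 0 (Euler: |V| - |E| + |F| = 2, with |E| = |D|/2)\<close>
definition plane_map ::
  "'d set \<Rightarrow> ('d \<Rightarrow> 'd) \<Rightarrow> ('d \<Rightarrow> 'd) \<Rightarrow> ('d \<Rightarrow> 'v) \<Rightarrow> 'v set \<Rightarrow> bool" where
  "plane_map D alpha sigma tail V \<longleftrightarrow>
     comb_map D alpha sigma tail V \<and>
     (\<forall>u\<in>V. \<forall>v\<in>V. (u, v) \<in> {(a, b). gx_adj D alpha tail a b}\<^sup>*) \<and>
     2 * card V + 2 * card (faces D alpha sigma) = card D + 4"

text \<open>G^x is the planarization of a 1-plane graph G (good drawing, every edge crossed at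
most once): every dummy vertex has degree 4, its 4 neighbours are distinct vertices of G
(crossing edges share no endpoint and are not loops); edges of G are not loops.
The two edges of G crossing at a dummy vertex c consist of opposite darts in the
rotation at c, i.e. d and sigma (sigma d).\<close>
definition one_plane_planarization ::
  "'d set \<Rightarrow> ('d \<Rightarrow> 'd) \<Rightarrow> ('d \<Rightarrow> 'd) \<Rightarrow> ('d \<Rightarrow> 'v) \<Rightarrow> 'v set \<Rightarrow> 'v set \<Rightarrow> bool" where
  "one_plane_planarization D alpha sigma tail V C \<longleftrightarrow>
     plane_map D alpha sigma tail V \<and> C \<subseteq> V \<and>
     (\<forall>d\<in>D. tail d \<notin> C \<longrightarrow> tail (alpha d) \<noteq> tail d) \<and>
     (\<forall>c\<in>C. card {d\<in>D. tail d = c} = 4 \<and>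
             inj_on (\<lambda>d. tail (alpha d)) {d\<in>D. tail d = c} \<and>
             (\<forall>d\<in>D. tail d = c \<longrightarrow> tail (alpha d) \<notin> C))"

text \<open>adjacency in G: an uncrossed edge (a G^x edge between two real vertices) or a
crossed edge (two opposite half-edges at a dummy vertex)\<close>
definition adjG ::
  "'d set \<Rightarrow> ('d \<Rightarrow> 'd) \<Rightarrow> ('d \<Rightarrow> 'd) \<Rightarrow> ('d \<Rightarrow> 'v) \<Rightarrow> 'v set \<Rightarrow> 'v set \<Rightarrow> 'v \<Rightarrow> 'v \<Rightarrow> bool" where
  "adjG D alpha sigma tail V C u v \<longleftrightarrow>
     u \<in> V - C \<and> v \<in> V - C \<and>
     ((\<exists>d\<in>D. tail d = u \<and> tail (alpha d) = v) \<or>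
      (\<exists>d\<in>D. tail d \<in> C \<and> tail (alpha d) = u \<and> tail (alpha (sigma (sigma d))) = v))"

text \<open>full: consecutive endpoints of every crossing are adjacent in G. For a dart d at
the dummy c, tail (alpha d) and tail (alpha (sigma d)) are consecutive endpoints, and all
consecutive pairs arise this way.\<close>
definition full_1plane ::
  "'d set \<Rightarrow> ('d \<Rightarrow> 'd) \<Rightarrow> ('d \<Rightarrow> 'd) \<Rightarrow> ('d \<Rightarrow> 'v) \<Rightarrow> 'v set \<Rightarrow> 'v set \<Rightarrow> bool" where
  "full_1plane D alpha sigma tail V C \<longleftrightarrow>
     (\<forall>d\<in>D. tail d \<in> C \<longrightarrow>
        adjG D alpha sigma tail V C (tail (alpha d)) (tail (alpha (sigma d))))"

definition face_edges :: "('d \<Rightarrow> 'd) \<Rightarrow> 'd set \<Rightarrow> 'd set set" where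
  "face_edges alpha f = (\<lambda>d. {d, alpha d}) ` f"

text \<open>The G^x edge {e, alpha e} is a kite edge of the crossing at c = tail d for the
consecutive endpoints tail (alpha d), tail (alpha (sigma d)): it is an uncrossed edge
of G joining them and some face of G^x is bounded exactly by it and the two half-edges
(u,c), (c,x).\<close>
definition kite_edge ::
  "'d set \<Rightarrow> ('d \<Rightarrow> 'd) \<Rightarrow> ('d \<Rightarrow> 'd) \<Rightarrow> ('d \<Rightarrow> 'v) \<Rightarrow> 'v set \<Rightarrow> 'd \<Rightarrow> 'd \<Rightarrow> bool" where
  "kite_edge D alpha sigma tail C e d \<longleftrightarrow>
     e \<in> D \<and> tail e \<notin> C \<and> tail (alpha e) \<notin> C \<and>
     {tail e, tail (alpha e)} = {tail (alpha d), tail (alpha (sigma d))} \<and>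
     (\<exists>f\<in>faces D alpha sigma.
        face_edges alpha f = {{e, alpha e}, {d, alpha d}, {sigma d, alpha (sigma d)}})"

definition kite_assumption ::
  "'d set \<Rightarrow> ('d \<Rightarrow> 'd) \<Rightarrow> ('d \<Rightarrow> 'd) \<Rightarrow> ('d \<Rightarrow> 'v) \<Rightarrow> 'v set \<Rightarrow> 'v set \<Rightarrow> bool" where
  "kite_assumption D alpha sigma tail V C \<longleftrightarrow>
     (\<forall>d\<in>D. tail d \<in> C \<longrightarrow>
        adjG D alpha sigma tail V C (tail (alpha d)) (tail (alpha (sigma d))) \<longrightarrow>
        (\<exists>e. kite_edge D alpha sigma tail C e d))"

definition conn_minus ::
  "'d set \<Rightarrow> ('d \<Rightarrow> 'd) \<Rightarrow> ('d \<Rightarrow> 'd) \<Rightarrow> ('d \<Rightarrow> 'v) \<Rightarrow> 'v set \<Rightarrow> 'v set \<Rightarrow> 'v set \<Rightarrow> 'v \<Rightarrow> 'v \<Rightarrow> bool" where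
  "conn_minus D alpha sigma tail V C S u v \<longleftrightarrow>
     (u, v) \<in> {(a, b). adjG D alpha sigma tail V C a b \<and> a \<notin> S \<and> b \<notin> S}\<^sup>*"

definition separating ::
  "'d set \<Rightarrow> ('d \<Rightarrow> 'd) \<Rightarrow> ('d \<Rightarrow> 'd) \<Rightarrow> ('d \<Rightarrow> 'v) \<Rightarrow> 'v set \<Rightarrow> 'v set \<Rightarrow> 'v set \<Rightarrow> bool" where
  "separating D alpha sigma tail V C S \<longleftrightarrow>
     S \<subseteq> V - C \<and>
     (\<exists>u\<in>V - C - S. \<exists>v\<in>V - C - S. \<not> conn_minus D alpha sigma tail V C S u v)"

definition minimal_separating ::
  "'d set \<Rightarrow> ('d \<Rightarrow> 'd) \<Rightarrow> ('d \<Rightarrow> 'd) \<Rightarrow> ('d \<Rightarrow> 'v) \<Rightarrow> 'v set \<Rightarrow> 'v set \<Rightarrow> 'v set \<Rightarrow> bool" where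
  "minimal_separating D alpha sigma tail V C S \<longleftrightarrow>
     separating D alpha sigma tail V C S \<and>
     (\<forall>T. T \<subset> S \<longrightarrow> \<not> separating D alpha sigma tail V C T)"

definition transition_face ::
  "'d set \<Rightarrow> ('d \<Rightarrow> 'd) \<Rightarrow> ('d \<Rightarrow> 'd) \<Rightarrow> ('d \<Rightarrow> 'v) \<Rightarrow> 'v set \<Rightarrow> 'v set \<Rightarrow> 'v set \<Rightarrow> 'd set \<Rightarrow> bool" where
  "transition_face D alpha sigma tail V C S f \<longleftrightarrow>
     (\<exists>d\<in>f. tail d \<in> S \<and> tail (alpha d) \<in> S) \<or>
     (\<exists>d1\<in>f. \<exists>d2\<in>f. tail d1 \<in> V - C - S \<and> tail d2 \<in> V - C - S \<and>
        \<not> conn_minus D alpha sigma tail V C S (tail d1) (tail d2))"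

end

theory Submission
  imports Defs
begin

lemma orb_iter: "(f ^^ n) d \<in> orb f d"
  by (auto simp: orb_def)

lemma iter_in: "\<forall>x\<in>A. f x \<in> A \<Longrightarrow> d \<in> A \<Longrightarrow> (f ^^ m) d \<in> A"
  by (induction m) auto

lemma iter_cancel:
  assumes "inj_on f A" "\<forall>x\<in>A. f x \<in> A" "x \<in> A" "y \<in> A" "(f ^^ a) x = (f ^^ a) y"
  shows "x = y"
  using assms(5)
proof (induction a)
  case 0 then show ?case by simp
next
  case (Suc a)
  have "f ((f ^^ a) x) = f ((f ^^ a) y)" using Suc.prems by simp
  then have "(f ^^ a) x = (f ^^ a) y"
    using assms(1) iter_in[OF assms(2) assms(3)] iter_in[OF assms(2) assms(4)]
    by (meson inj_onD)
  then show ?case using Suc.IH by simp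
qed

lemma period_exists:
  assumes "finite A" "\<forall>x\<in>A. f x \<in> A" "inj_on f A" "d \<in> A"
  shows "\<exists>p>0. p \<le> card A \<and> (f ^^ p) d = d"
proof -
  have "\<not> inj_on (\<lambda>m. (f ^^ m) d) {..card A}"
  proof
    assume "inj_on (\<lambda>m. (f ^^ m) d) {..card A}"
    moreover have "(\<lambda>m. (f ^^ m) d) ` {..card A} \<subseteq> A" using iter_in[OF assms(2) assms(4)] by auto
    ultimately have "card {..card A} \<le> card A" using card_inj_on_le assms(1) by blast
    then show False by simp
  qed
  then obtain a b where ab: "a \<le> card A" "b \<le> card A" "a \<noteq> b" "(f ^^ a) d = (f ^^ b) d"
    unfolding inj_on_def by auto
  have "\<exists>a b. a < b \<and> b \<le> card A \<and> (f ^^ a) d = (f ^^ b) d"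
    using ab by (metis linorder_neqE_nat)
  then obtain a b where ab2: "a < b" "b \<le> card A" "(f ^^ a) d = (f ^^ b) d" by blast
  have "(f ^^ b) d = (f ^^ a) ((f ^^ (b - a)) d)"
    using ab2(1) by (metis funpow_add le_add_diff_inverse less_imp_le_nat o_apply)
  then have "d = (f ^^ (b - a)) d"
    using iter_cancel[OF assms(3) assms(2) assms(4) iter_in[OF assms(2) assms(4)]] ab2(3) by metis
  then show ?thesis using ab2 by (intro exI[of _ "b - a"]) auto
qed

lemma pow_mult: "(f ^^ p) d = d \<Longrightarrow> (f ^^ (q * p)) d = d"
proof (induction q)
  case 0 then show ?case by simp
next
  case (Suc q)
  have "(f ^^ (Suc q * p)) d = (f ^^ p) ((f ^^ (q * p)) d)"
    by (simp add: funpow_add)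
  then show ?case using Suc by simp
qed

lemma pow_mod: "(f ^^ p) d = d \<Longrightarrow> (f ^^ n) d = (f ^^ (n mod p)) d"
proof -
  assume h: "(f ^^ p) d = d"
  have "(f ^^ n) d = (f ^^ (n mod p + n div p * p)) d" by simp
  also have "\<dots> = (f ^^ (n mod p)) ((f ^^ (n div p * p)) d)" by (simp only: funpow_add o_apply)
  also have "\<dots> = (f ^^ (n mod p)) d" using pow_mult[OF h] by simp
  finally show ?thesis .
qed

lemma orb_sub: "0 < p \<Longrightarrow> (f ^^ p) d = d \<Longrightarrow> orb f d \<subseteq> (\<lambda>m. (f ^^ m) d) ` {..<p}"
  unfolding orb_def using pow_mod by fastforce

lemma card_orb_le: "0 < p \<Longrightarrow> (f ^^ p) d = d \<Longrightarrow> card (orb f d) \<le> p"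
  by (metis card_image_le card_lessThan finite_lessThan orb_sub surj_card_le)


theorem claim1:
  fixes D :: "'d set" and alpha sigma :: "'d \<Rightarrow> 'd" and tail :: "'d \<Rightarrow> 'v"
    and V C S :: "'v set" and f :: "'d set"
  assumes "one_plane_planarization D alpha sigma tail V C"
    and "full_1plane D alpha sigma tail V C"
    and "kite_assumption D alpha sigma tail V C"
    and "minimal_separating D alpha sigma tail V C S"
    and "f \<in> faces D alpha sigma"
    and "transition_face D alpha sigma tail V C S f"
  shows "2 \<le> card {d \<in> f. tail d \<in> S}"
proof -
  note A1 = assms(1)[unfolded one_plane_planarization_def plane_map_def comb_map_def]
  have fin: "finite D" using A1 by blast
  have al: "\<forall>d\<in>D. alpha d \<in> D \<and> alpha d \<noteq> d \<and> alpha (alpha d) = d" using A1 by blast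
  have bij: "bij_betw sigma D D" using A1 by blast
  have tl: "tail ` D = V" using A1 by blast
  have rot: "\<forall>d\<in>D. \<forall>d'\<in>D. tail d = tail d' \<longleftrightarrow> d' \<in> orb sigma d" using A1 by blast
  have noloop: "\<forall>d\<in>D. tail d \<notin> C \<longrightarrow> tail (alpha d) \<noteq> tail d" using A1 by blast
  have cross: "\<forall>c\<in>C. card {d\<in>D. tail d = c} = 4 \<and> (\<forall>d\<in>D. tail d = c \<longrightarrow> tail (alpha d) \<notin> C)"
    using A1 by blast
  have full: "\<forall>d\<in>D. tail d \<in> C \<longrightarrow>
        adjG D alpha sigma tail V C (tail (alpha d)) (tail (alpha (sigma d)))"
    using assms(2) unfolding full_1plane_def by blast
  have SV: "S \<subseteq> V - C" using assms(4) unfolding minimal_separating_def separating_def by blast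
  have sD: "\<forall>x\<in>D. sigma x \<in> D" using bij by (meson bij_betw_apply)
  have sinj: "inj_on sigma D" using bij by (meson bij_betw_imp_inj_on)
  define nx where "nx = sigma \<circ> alpha"
  have nxD: "\<forall>x\<in>D. nx x \<in> D" using sD al by (simp add: nx_def)
  have nxinj: "inj_on nx D"
  proof (rule inj_onI)
    fix x y assume "x \<in> D" "y \<in> D" "nx x = nx y"
    then have "alpha x = alpha y" using sinj al unfolding nx_def by (auto dest: inj_onD)
    then show "x = y" using al \<open>x \<in> D\<close> \<open>y \<in> D\<close> by metis
  qed
  have tsig: "tail (sigma x) = tail x" if "x \<in> D" for x
  proof -
    have "sigma x \<in> orb sigma x" using orb_iter[of 1 sigma x] by simp
    then show ?thesis using rot that sD by metis
  qed
  have tsigk: "tail ((sigma ^^ k) x) = tail x" if "x \<in> D" for x k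
    using that by (induction k) (auto simp: tsig iter_in[OF sD])
  have tnx: "tail (nx x) = tail (alpha x)" if "x \<in> D" for x
    using tsig al that by (simp add: nx_def)
  have sig4: "(sigma ^^ 4) x = x" if x: "x \<in> D" "tail x \<in> C" for x
  proof -
    define A where "A = orb sigma x"
    have AD: "A = {d\<in>D. tail d = tail x}"
    proof
      show "A \<subseteq> {d\<in>D. tail d = tail x}"
        unfolding A_def orb_def using iter_in[OF sD x(1)] tsigk[OF x(1)] by auto
      show "{d\<in>D. tail d = tail x} \<subseteq> A" unfolding A_def
      proof
        fix d assume "d \<in> {d\<in>D. tail d = tail x}"
        then have "d \<in> D" "tail x = tail d" by auto
        then show "d \<in> orb sigma x" using rot x(1) by blast
      qed
    qed
    have c4: "card A = 4" using AD cross x by auto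
    have finA: "finite A" using AD fin by auto
    have clA: "\<forall>y\<in>A. sigma y \<in> A" using AD sD tsig by auto
    have injA: "inj_on sigma A" using AD sinj by (auto intro: inj_on_subset)
    have xA: "x \<in> A" using AD x by auto
    obtain p where p: "p > 0" "p \<le> 4" "(sigma ^^ p) x = x"
      using period_exists[OF finA clA injA xA] c4 by auto
    have "4 \<le> p" using card_orb_le[OF p(1) p(3)] c4 A_def by simp
    then show ?thesis using p by simp
  qed
  have adj_sym: "adjG D alpha sigma tail V C v u" if h: "adjG D alpha sigma tail V C u v" for u v
  proof -
    have uv: "u \<in> V - C" "v \<in> V - C" using h unfolding adjG_def by auto
    consider (a) "\<exists>d\<in>D. tail d = u \<and> tail (alpha d) = v"
      | (b) "\<exists>d\<in>D. tail d \<in> C \<and> tail (alpha d) = u \<and> tail (alpha (sigma (sigma d))) = v"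
      using h unfolding adjG_def by blast
    then show ?thesis
    proof cases
      case a
      then obtain d where "d \<in> D" "tail d = u" "tail (alpha d) = v" by blast
      then show ?thesis unfolding adjG_def using uv al by (metis)
    next
      case b
      then obtain d where d: "d \<in> D" "tail d \<in> C" "tail (alpha d) = u" "tail (alpha (sigma (sigma d))) = v"
        by blast
      have "(sigma ^^ 4) d = d" using sig4 d by blast
      then have "sigma (sigma (sigma (sigma d))) = d" by (simp add: numeral_eq_Suc)
      moreover have "sigma (sigma d) \<in> D" "tail (sigma (sigma d)) \<in> C" using d sD tsig by auto
      ultimately show ?thesis unfolding adjG_def using uv d by metis
    qed
  qed
  define R where "R = {(a, b). adjG D alpha sigma tail V C a b \<and> a \<notin> S \<and> b \<notin> S}"
  have conn: "conn_minus D alpha sigma tail V C S u v \<longleftrightarrow> (u, v) \<in> R\<^sup>*" for u v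
    unfolding conn_minus_def R_def by simp
  have symR: "sym R" unfolding R_def sym_def using adj_sym by blast
  have conn_sym: "(v, u) \<in> R\<^sup>*" if "(u, v) \<in> R\<^sup>*" for u v
    using sym_rtrancl[OF symR] that by (meson symD)
  have tV: "tail x \<in> V" if "x \<in> D" for x using tl that by blast
  have W: "(tail e, tail ((nx ^^ k) e)) \<in> R\<^sup>*"
    if "e \<in> D" "tail e \<notin> C" "tail ((nx ^^ k) e) \<notin> C" "\<forall>m\<le>k. tail ((nx ^^ m) e) \<notin> S" for e k
    using that
  proof (induction k rule: less_induct)
    case (less k)
    show ?case
    proof (cases k)
      case 0 then show ?thesis by simp
    next
      case (Suc j)
      define x where "x = (nx ^^ j) e"
      have xD: "x \<in> D" unfolding x_def using iter_in[OF nxD less.prems(1)] .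
      have kx: "(nx ^^ k) e = nx x" using Suc x_def by simp
      show ?thesis
      proof (cases "tail x \<in> C")
        case False
        have IH: "(tail e, tail x) \<in> R\<^sup>*" unfolding x_def
          using less.IH[of j] less.prems Suc False x_def by auto
        have "adjG D alpha sigma tail V C (tail x) (tail (nx x))"
          unfolding adjG_def using xD False less.prems(3) kx tV[OF xD] tV[OF nxD[rule_format, OF xD]]
            tnx[OF xD] by auto
        moreover have "tail x \<notin> S" "tail (nx x) \<notin> S"
          using less.prems(4) Suc x_def kx by auto
        ultimately have "(tail x, tail (nx x)) \<in> R" unfolding R_def by simp
        then show ?thesis using IH kx by simp
      next
        case True
        have j0: "j \<noteq> 0"
        proof
          assume "j = 0" then show False using True less.prems(2) x_def by simp
        qed
        then obtain i where i: "j = Suc i" by (cases j) auto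
        define y where "y = (nx ^^ i) e"
        have yD: "y \<in> D" unfolding y_def using iter_in[OF nxD less.prems(1)] .
        have xy: "x = nx y" using i x_def y_def by simp
        have tay: "tail (alpha y) \<in> C" using True xy tnx[OF yD] by simp
        have ayD: "alpha y \<in> D" using al yD by blast
        have tyC: "tail y \<notin> C" using cross tay ayD al yD by metis
        have IH: "(tail e, tail y) \<in> R\<^sup>*" unfolding y_def
          using less.IH[of i] less.prems Suc i tyC y_def by auto
        have "adjG D alpha sigma tail V C (tail (alpha (alpha y))) (tail (alpha (sigma (alpha y))))"
          using full ayD tay by blast
        then have "adjG D alpha sigma tail V C (tail y) (tail (nx x))"
          using al yD xy tnx[OF nxD[rule_format, OF yD]] by (simp add: nx_def)
        moreover have "tail y \<notin> S" "tail (nx x) \<notin> S"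
          using less.prems(4) Suc i y_def kx by auto
        ultimately have "(tail y, tail (nx x)) \<in> R" unfolding R_def by simp
        then show ?thesis using IH kx by simp
      qed
    qed
  qed
  obtain d0 where d0: "d0 \<in> D" "f = orb nx d0"
    using assms(5) unfolding faces_def nx_def by auto
  have fD: "f \<subseteq> D" using d0 iter_in[OF nxD d0(1)] unfolding orb_def by auto
  have finf: "finite {d \<in> f. tail d \<in> S}" using fD fin by (auto intro: finite_subset)
  have two: "2 \<le> card {d \<in> f. tail d \<in> S}" if "x \<in> f" "y \<in> f" "x \<noteq> y" "tail x \<in> S" "tail y \<in> S" for x y
  proof -
    have "{x, y} \<subseteq> {d \<in> f. tail d \<in> S}" using that by auto
    then have "card {x, y} \<le> card {d \<in> f. tail d \<in> S}" using card_mono finf by blast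
    then show ?thesis using that by simp
  qed
  have fcl: "nx x \<in> f" if "x \<in> f" for x
    using that d0(2) unfolding orb_def by (auto intro: exI[of _ "Suc n" for n])
  consider (e) "\<exists>d\<in>f. tail d \<in> S \<and> tail (alpha d) \<in> S"
    | (fl) "\<exists>d1\<in>f. \<exists>d2\<in>f. tail d1 \<in> V - C - S \<and> tail d2 \<in> V - C - S \<and>
        \<not> conn_minus D alpha sigma tail V C S (tail d1) (tail d2)"
    using assms(6) unfolding transition_face_def by blast
  then show ?thesis
  proof cases
    case e
    then obtain d where d: "d \<in> f" "tail d \<in> S" "tail (alpha d) \<in> S" by blast
    have dD: "d \<in> D" using d fD by auto
    have "tail (nx d) \<noteq> tail d" using tnx[OF dD] noloop dD d SV by auto
    then have "nx d \<noteq> d" by auto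
    then show ?thesis using two[OF d(1) fcl[OF d(1)]] d tnx[OF dD] by auto
  next
    case fl
    define P where "P = (LEAST p. 0 < p \<and> (nx ^^ p) d0 = d0)"
    have exP: "\<exists>p. 0 < p \<and> (nx ^^ p) d0 = d0"
      using period_exists[OF fin nxD nxinj d0(1)] by blast
    have P: "0 < P" "(nx ^^ P) d0 = d0" using LeastI_ex[OF exP] unfolding P_def by auto
    have Pmin: "\<not> ((nx ^^ q) d0 = d0)" if "0 < q" "q < P" for q
      using not_less_Least[of q "\<lambda>p. 0 < p \<and> (nx ^^ p) d0 = d0"] that unfolding P_def by auto
    have distinct: "(nx ^^ a) d0 \<noteq> (nx ^^ b) d0" if "a < b" "b < a + P" for a b
    proof
      assume eq: "(nx ^^ a) d0 = (nx ^^ b) d0"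
      have "(nx ^^ b) d0 = (nx ^^ a) ((nx ^^ (b - a)) d0)"
        using that(1) by (metis funpow_add le_add_diff_inverse less_imp_le_nat o_apply)
      then have "d0 = (nx ^^ (b - a)) d0"
        using iter_cancel[OF nxinj nxD d0(1) iter_in[OF nxD d0(1)]] eq by metis
      moreover have "0 < b - a" "b - a < P" using that by linarith+
      ultimately show False using Pmin[of "b - a"] by auto
    qed
    have core: "2 \<le> card {d \<in> f. tail d \<in> S}"
      if ij: "i < j" "j < P" and ti: "tail ((nx ^^ i) d0) \<in> V - C - S"
        and tj: "tail ((nx ^^ j) d0) \<in> V - C - S"
        and nc: "(tail ((nx ^^ i) d0), tail ((nx ^^ j) d0)) \<notin> R\<^sup>*" for i j
    proof -
      have seg: "\<exists>m. 0 < m \<and> m < k \<and> tail ((nx ^^ (a + m)) d0) \<in> S"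
        if "tail ((nx ^^ a) d0) \<in> V - C - S" "tail ((nx ^^ (a + k)) d0) \<in> V - C - S"
          "(tail ((nx ^^ a) d0), tail ((nx ^^ (a + k)) d0)) \<notin> R\<^sup>*" for a k
      proof -
        define e where "e = (nx ^^ a) d0"
        have eD: "e \<in> D" unfolding e_def using iter_in[OF nxD d0(1)] .
        have ek: "(nx ^^ m) e = (nx ^^ (a + m)) d0" for m
          unfolding e_def by (metis add.commute comp_apply funpow_add)
        have "\<not> (\<forall>m\<le>k. tail ((nx ^^ m) e) \<notin> S)"
          using W[OF eD, of k] that ek[of k] unfolding e_def by auto
        then obtain m where m: "m \<le> k" "tail ((nx ^^ (a + m)) d0) \<in> S" using ek by auto
        have "m \<noteq> 0"
        proof
          assume "m = 0" then show False using m that(1) by simp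
        qed
        moreover have "m \<noteq> k"
        proof
          assume "m = k" then show False using m that(2) by simp
        qed
        ultimately show ?thesis using m by (intro exI[of _ m]) auto
      qed
      obtain m1 where m1: "0 < m1" "m1 < j - i" "tail ((nx ^^ (i + m1)) d0) \<in> S"
        using seg[of i "j - i"] ti tj nc ij by auto
      have bk: "(nx ^^ (j + (P - j + i))) d0 = (nx ^^ i) d0"
      proof -
        have "j + (P - j + i) = i + P" using ij by simp
        moreover have "(nx ^^ (i + P)) d0 = (nx ^^ i) ((nx ^^ P) d0)" by (simp only: funpow_add o_apply)
        ultimately show ?thesis using P(2) by (metis add.commute)
      qed
      obtain m2 where m2: "0 < m2" "m2 < P - j + i" "tail ((nx ^^ (j + m2)) d0) \<in> S"
        using seg[of j "P - j + i"] ti tj nc bk conn_sym by auto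
      have ne: "(nx ^^ (i + m1)) d0 \<noteq> (nx ^^ (j + m2)) d0"
        using distinct[of "i + m1" "j + m2"] m1 m2 ij by auto
      have inf: "(nx ^^ n) d0 \<in> f" for n using d0(2) orb_iter by metis
      show ?thesis using two[OF inf inf ne] m1 m2 by blast
    qed
    from fl obtain d1 d2 where dd: "d1 \<in> f" "d2 \<in> f" "tail d1 \<in> V - C - S" "tail d2 \<in> V - C - S"
      "(tail d1, tail d2) \<notin> R\<^sup>*" using conn by blast
    obtain a b where ab: "d1 = (nx ^^ a) d0" "d2 = (nx ^^ b) d0" using dd d0(2) unfolding orb_def by auto
    have a': "d1 = (nx ^^ (a mod P)) d0" "d2 = (nx ^^ (b mod P)) d0"
      using ab pow_mod[OF P(2)] by auto
    have "a mod P \<noteq> b mod P" using a' dd(5) by auto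
    then consider "a mod P < b mod P" | "b mod P < a mod P" by linarith
    then show ?thesis
    proof cases
      case 1 then show ?thesis using core[of "a mod P" "b mod P"] a' dd P(1) by auto
    next
      case 2 then show ?thesis using core[of "b mod P" "a mod P"] a' dd P(1) conn_sym by auto
    qed
  qed
qed

end
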